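(* Let $(B_n)_{n\ge1}$ be a family of width-$5$ branching programs, where $B_n$ is on variables $x_1,\dots,x_n$ and has size at most $2^{(\log n)^c}$ for a constant $c$. Then there exist a constant space Turing machine $M$ with advice, a constant $c'$, and advice strings $(a_n)$ with $|a_n|\le 2^{(\log n)^{c'}}$, such that for every $x\in\{0,1\}^*$, $M$ accepts $x$ with advice $a_{|x|}$ iff $B_{|x|}(x)=1$.
   Context: A branching program on variables $x_1,\dots,x_n$ is a directed acyclic graph with a designated start node; nodes of out-degree 2 (inner nodes) are labeled by a variable and have one outgoing edge labeled 0 and one labeled 1; nodes of out-degree 0 (sinks) are labeled 0 or 1. An assignment determines a path from the start node to a sink, whose label is the output. Its size is the number of nodes. A width-$5$ branching program is one whose nodes are arranged into levels with edges going only from one level to the next, each level containing at most $5$ nodes. A constant space Turing machine with advice is a deterministic Turing machine with a read-only two-way input tape holding $x$, a separate read-only two-way advice tape holding an advice string $a_{|x|}$ depending only on $|x|$, and a work tape of which only a constant number of cells (independent of the input and advice) is ever used. *)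

theory Defs
  imports Complex_Main
begin

text \<open>Nodes are numbered 0 ..< size. An inner node Inner i a b queries the variable
  x_(i+1) (list index i) and goes to node a on 0 and to node b on 1; a sink Sink b outputs b.\<close>

datatype bpnode = Inner nat nat nat | Sink bool

record bp =
  bp_nodes :: "bpnode list"
  bp_start :: nat

definition bp_size :: "bp \<Rightarrow> nat" where
  "bp_size B = length (bp_nodes B)"

definition bp_wf :: "nat \<Rightarrow> bp \<Rightarrow> bool" where
  "bp_wf n B \<longleftrightarrow> bp_start B < bp_size B \<and>
     (\<forall>v < bp_size B. \<forall>i a b. bp_nodes B ! v = Inner i a b \<longrightarrow>
        i < n \<and> a < bp_size B \<and> b < bp_size B)"

text \<open>Width-5 (layered) branching program: a level function such that every edge goes
  from a level to the next one and each level has at most 5 nodes (this also makes the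
  graph acyclic).\<close>
definition width5_bp :: "nat \<Rightarrow> bp \<Rightarrow> bool" where
  "width5_bp n B \<longleftrightarrow> bp_wf n B \<and>
     (\<exists>lev :: nat \<Rightarrow> nat.
        (\<forall>v < bp_size B. \<forall>i a b. bp_nodes B ! v = Inner i a b \<longrightarrow>
            lev a = Suc (lev v) \<and> lev b = Suc (lev v)) \<and>
        (\<forall>l. card {v. v < bp_size B \<and> lev v = l} \<le> 5))"

definition bp_step :: "bp \<Rightarrow> bool list \<Rightarrow> nat \<Rightarrow> nat" where
  "bp_step B x v = (case bp_nodes B ! v of
       Inner i a b \<Rightarrow> (if x ! i then b else a)
     | Sink _ \<Rightarrow> v)"

text \<open>Output: the label of the sink reached by following the computation path; in an
  acyclic program the path reaches a sink within size steps and then stays there.\<close>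
definition bp_eval :: "bp \<Rightarrow> bool list \<Rightarrow> bool" where
  "bp_eval B x = (case bp_nodes B ! ((bp_step B x ^^ bp_size B) (bp_start B)) of
       Sink b \<Rightarrow> b
     | Inner _ _ _ \<Rightarrow> False)"

text \<open>Read-only tapes hold a word w between endmarkers: cell 0 is the left endmarker,
  cells 1..|w| hold w, cell |w|+1 is the right endmarker.\<close>
datatype tsym = LEnd | Sym bool | REnd

definition tape_read :: "bool list \<Rightarrow> nat \<Rightarrow> tsym" where
  "tape_read w i = (if i = 0 then LEnd else if i \<le> length w then Sym (w ! (i - 1)) else REnd)"

datatype move = MoveL | MoveS | MoveR

fun mv :: "move \<Rightarrow> nat \<Rightarrow> nat" where
  "mv MoveL i = i - 1"
| "mv MoveS i = i"
| "mv MoveR i = Suc i"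

text \<open>States are 0 ..< tm_states, work-tape symbols 0 ..< tm_syms (0 is the blank).
  The transition function gets state, input symbol, advice symbol, work symbol and returns
  new state, written work symbol, and moves of input, advice and work heads
  (None = halt).\<close>
record tm =
  tm_states :: nat
  tm_syms :: nat
  tm_start :: nat
  tm_accept :: "nat set"
  tm_delta :: "nat \<Rightarrow> tsym \<Rightarrow> tsym \<Rightarrow> nat \<Rightarrow> (nat \<times> nat \<times> move \<times> move \<times> move) option"

definition wf_tm :: "tm \<Rightarrow> bool" where
  "wf_tm M \<longleftrightarrow> 0 < tm_syms M \<and> tm_start M < tm_states M \<and>
     (\<forall>q a b g q' g' d1 d2 d3. q < tm_states M \<longrightarrow> g < tm_syms M \<longrightarrow>
        tm_delta M q a b g = Some (q', g', d1, d2, d3) \<longrightarrow>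
        q' < tm_states M \<and> g' < tm_syms M)"

record cfg =
  c_state :: nat
  c_ihead :: nat
  c_ahead :: nat
  c_whead :: nat
  c_wtape :: "nat \<Rightarrow> nat"

definition init_cfg :: "tm \<Rightarrow> cfg" where
  "init_cfg M = \<lparr>c_state = tm_start M, c_ihead = 0, c_ahead = 0, c_whead = 0,
                 c_wtape = (\<lambda>_. 0)\<rparr>"

definition tm_step :: "tm \<Rightarrow> bool list \<Rightarrow> bool list \<Rightarrow> cfg \<Rightarrow> cfg option" where
  "tm_step M x y c =
     (case tm_delta M (c_state c) (tape_read x (c_ihead c)) (tape_read y (c_ahead c))
                      (c_wtape c (c_whead c)) of
        None \<Rightarrow> None
      | Some (q', g', d1, d2, d3) \<Rightarrow>
          Some \<lparr>c_state = q',
                c_ihead = min (Suc (length x)) (mv d1 (c_ihead c)),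
                c_ahead = min (Suc (length y)) (mv d2 (c_ahead c)),
                c_whead = mv d3 (c_whead c),
                c_wtape = (c_wtape c)(c_whead c := g')\<rparr>)"

fun tm_run :: "tm \<Rightarrow> bool list \<Rightarrow> bool list \<Rightarrow> nat \<Rightarrow> cfg" where
  "tm_run M x y 0 = init_cfg M"
| "tm_run M x y (Suc t) = (case tm_step M x y (tm_run M x y t) of
       None \<Rightarrow> tm_run M x y t
     | Some c \<Rightarrow> c)"

definition tm_accepts :: "tm \<Rightarrow> bool list \<Rightarrow> bool list \<Rightarrow> bool" where
  "tm_accepts M x y \<longleftrightarrow> (\<exists>t. tm_step M x y (tm_run M x y t) = None \<and>
                              c_state (tm_run M x y t) \<in> tm_accept M)"

definition tm_const_space :: "tm \<Rightarrow> nat \<Rightarrow> bool" where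
  "tm_const_space M k \<longleftrightarrow> (\<forall>x y t. c_whead (tm_run M x y t) < k)"

end

theory Submission
  imports Defs
begin


datatype st = S0 | S1 | S2 | S3 | SM | SM2 | ACC | REJ | SKIP nat nat | ENTRY nat
  | REWIND nat | COUNT nat | LABEL | TGTA nat bool nat | TGTB nat bool nat

fun tup :: "st \<Rightarrow> nat \<times> nat \<times> nat \<times> bool \<times> nat" where
  "tup S0 = (0,0,0,False,0)"
| "tup S1 = (1,0,0,False,0)"
| "tup S2 = (2,0,0,False,0)"
| "tup S3 = (3,0,0,False,0)"
| "tup SM = (4,0,0,False,0)"
| "tup SM2 = (5,0,0,False,0)"
| "tup ACC = (6,0,0,False,0)"
| "tup REJ = (7,0,0,False,0)"
| "tup (SKIP m t) = (8,m,t,False,0)"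
| "tup (ENTRY j) = (9,0,j,False,0)"
| "tup (REWIND j) = (10,0,j,False,0)"
| "tup (COUNT j) = (11,0,j,False,0)"
| "tup LABEL = (12,0,0,False,0)"
| "tup (TGTA j b t) = (13,0,j,b,t)"
| "tup (TGTB j b t) = (14,0,j,b,t)"

fun untup :: "nat \<times> nat \<times> nat \<times> bool \<times> nat \<Rightarrow> st" where
  "untup (ph,m,j,b,t) = (if ph = 0 then S0 else if ph = 1 then S1 else if ph = 2 then S2
     else if ph = 3 then S3 else if ph = 4 then SM else if ph = 5 then SM2 else if ph = 6 then ACC
     else if ph = 7 then REJ else if ph = 8 then SKIP m j else if ph = 9 then ENTRY j
     else if ph = 10 then REWIND j else if ph = 11 then COUNT j else if ph = 12 then LABEL
     else if ph = 13 then TGTA j b t else TGTB j b t)"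

definition tenc :: "nat \<times> nat \<times> nat \<times> bool \<times> nat \<Rightarrow> nat" where
  "tenc x = (case x of (ph,m,j,b,t) \<Rightarrow>
     ph mod 16 + 16 * (m mod 32 + 32 * (j mod 8 + 8 * ((if b then 1 else 0) + 2 * (t mod 8)))))"

definition tdec :: "nat \<Rightarrow> nat \<times> nat \<times> nat \<times> bool \<times> nat" where
  "tdec q = (q mod 16, (q div 16) mod 32, (q div 512) mod 8, (q div 4096) mod 2 = 1, (q div 8192) mod 8)"

lemma mod_div_aux: "(a::nat) < A \<Longrightarrow> (a + A * b) mod A = a \<and> (a + A * b) div A = b"
  by simp

lemma tdec_tenc: "ph < 16 \<Longrightarrow> m < 32 \<Longrightarrow> j < 8 \<Longrightarrow> t < 8 \<Longrightarrow> tdec (tenc (ph,m,j,b,t)) = (ph,m,j,b,t)"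
proof -
  assume a: "ph < 16" "m < 32" "j < 8" "t < 8"
  define bb where "bb = (if b then 1 else 0::nat)"
  have bb: "bb < 2" by (simp add: bb_def)
  define R3 where "R3 = bb + 2 * t"
  define R2 where "R2 = j + 8 * R3"
  define R1 where "R1 = m + 32 * R2"
  define Q where "Q = ph + 16 * R1"
  have e: "tenc (ph,m,j,b,t) = Q"
    using a by (simp add: tenc_def bb_def Q_def R1_def R2_def R3_def)
  have q1: "Q mod 16 = ph" "Q div 16 = R1" using a unfolding Q_def by simp_all
  have r1: "R1 mod 32 = m" "R1 div 32 = R2" using a unfolding R1_def by simp_all
  have r2: "R2 mod 8 = j" "R2 div 8 = R3" using a unfolding R2_def by simp_all
  have r3: "R3 mod 2 = bb" "R3 div 2 = t" using bb unfolding R3_def by simp_all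
  have "Q div 512 = R2" using q1 r1 div_mult2_eq[of Q 16 32] by simp
  moreover have "Q div 4096 = R3" using q1 r1 r2 div_mult2_eq[of Q 512 8] \<open>Q div 512 = R2\<close> by simp
  moreover have "Q div 8192 = t" using r3 div_mult2_eq[of Q 4096 2] \<open>Q div 4096 = R3\<close> by simp
  ultimately show ?thesis unfolding tdec_def e using q1 r1 r2 r3 a
    by (simp add: bb_def)
qed

lemma tenc_less: "tenc x < 65536"
proof -
  obtain ph m j b t where x: "x = (ph,m,j,b,t)" by (cases x) auto
  define bb where "bb = (if b then 1 else 0::nat)"
  have "ph mod 16 \<le> 15" "m mod 32 \<le> 31" "j mod 8 \<le> 7" "t mod 8 \<le> 7" "bb \<le> 1"
    by (auto simp: bb_def)
  then have "ph mod 16 + 16 * (m mod 32 + 32 * (j mod 8 + 8 * (bb + 2 * (t mod 8)))) \<le> 15 + 16 * (31 + 32 * (7 + 8 * (1 + 2 * 7)))"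
    by (intro add_mono mult_le_mono2) auto
  then show ?thesis by (simp add: tenc_def x bb_def)
qed

fun bnd :: "st \<Rightarrow> bool" where
  "bnd (SKIP m t) = (m < 32 \<and> t < 8)"
| "bnd (ENTRY j) = (j < 8)"
| "bnd (REWIND j) = (j < 8)"
| "bnd (COUNT j) = (j < 8)"
| "bnd (TGTA j b t) = (j < 8 \<and> t < 8)"
| "bnd (TGTB j b t) = (j < 8 \<and> t < 8)"
| "bnd _ = True"

definition enc :: "st \<Rightarrow> nat" where "enc s = tenc (tup s)"
definition dec :: "nat \<Rightarrow> st" where "dec q = untup (tdec q)"

lemma dec_enc: "bnd s \<Longrightarrow> dec (enc s) = s"
  by (cases s) (simp_all add: enc_def dec_def tdec_tenc)


fun dl :: "st \<Rightarrow> tsym \<Rightarrow> tsym \<Rightarrow> (st \<times> move \<times> move) option" where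
  "dl S0 a b = Some (S1, MoveR, MoveS)"
| "dl S1 a b = Some (S2, MoveR, MoveS)"
| "dl S2 a b = (if a = REnd then Some (SM, MoveS, MoveS) else Some (S3, MoveR, MoveS))"
| "dl S3 a b = (if a = REnd then Some (SM, MoveS, MoveS) else Some (SKIP 0 0, MoveS, MoveR))"
| "dl SM a b = Some (SM2, MoveS, MoveR)"
| "dl SM2 a b = (if b = Sym True then Some (ACC, MoveS, MoveS) else Some (REJ, MoveS, MoveS))"
| "dl ACC a b = None"
| "dl REJ a b = None"
| "dl (SKIP m t) a b = (if m = 0 then Some (ENTRY t, MoveS, MoveS)
      else (case b of Sym bb \<Rightarrow> (if bb then Some (SKIP m t, MoveS, MoveR)
                                    else Some (SKIP (m - 1) t, MoveS, MoveR))
             | _ \<Rightarrow> Some (REJ, MoveS, MoveS)))"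
| "dl (ENTRY j) a b = (case b of Sym bb \<Rightarrow> (if bb then Some (REWIND j, MoveS, MoveS)
                                            else Some (LABEL, MoveS, MoveR))
             | _ \<Rightarrow> Some (REJ, MoveS, MoveS))"
| "dl LABEL a b = (if b = Sym True then Some (ACC, MoveS, MoveS) else Some (REJ, MoveS, MoveS))"
| "dl (REWIND j) a b = (if a = LEnd then Some (COUNT j, MoveS, MoveS) else Some (REWIND j, MoveL, MoveS))"
| "dl (COUNT j) a b = (if b = Sym True then Some (COUNT j, MoveR, MoveR)
      else Some (TGTA j (a = Sym True) 0, MoveS, MoveR))"
| "dl (TGTA j bt t) a b = (if b = Sym True then Some (TGTA j bt (if bt then t else Suc t), MoveS, MoveR)
      else Some (TGTB j bt t, MoveS, MoveR))"
| "dl (TGTB j bt t) a b = (if b = Sym True then Some (TGTB j bt (if bt then Suc t else t), MoveS, MoveR)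
      else Some (SKIP (3 * (4 - j) + 3 * t) t, MoveS, MoveR))"

definition Mach :: tm where
  "Mach = \<lparr>tm_states = 65536, tm_syms = 1, tm_start = enc S0, tm_accept = {enc ACC},
     tm_delta = (\<lambda>q a b g. if q < 65536 then
        (case dl (dec q) a b of None \<Rightarrow> None | Some (s', d1, d2) \<Rightarrow> Some (enc s', 0, d1, d2, MoveS))
        else None)\<rparr>"

lemma enc_less: "enc s < 65536" by (simp add: enc_def tenc_less)

lemma wf_Mach: "wf_tm Mach"
  unfolding wf_tm_def Mach_def by (auto simp: enc_less split: option.splits)

lemma whead_step: "tm_step Mach x y c = Some c' \<Longrightarrow> c_whead c' = c_whead c"
  unfolding tm_step_def Mach_def by (auto split: option.splits if_splits)

lemma whead_run: "c_whead (tm_run Mach x y t) = 0"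
proof (induction t)
  case 0 then show ?case by (simp add: init_cfg_def)
next
  case (Suc t) then show ?case
    by (cases "tm_step Mach x y (tm_run Mach x y t)") (auto dest: whead_step)
qed

lemma const_Mach: "tm_const_space Mach 1"
  unfolding tm_const_space_def using whead_run by simp

definition cf :: "st \<Rightarrow> nat \<Rightarrow> nat \<Rightarrow> cfg" where
  "cf s i h = \<lparr>c_state = enc s, c_ihead = i, c_ahead = h, c_whead = 0, c_wtape = (\<lambda>_. 0)\<rparr>"

lemma init_cf: "init_cfg Mach = cf S0 0 0"
  by (simp add: init_cfg_def cf_def Mach_def)

lemma step_cf: "bnd s \<Longrightarrow> tm_step Mach x y (cf s i h) =
   (case dl s (tape_read x i) (tape_read y h) of None \<Rightarrow> None
     | Some (s', d1, d2) \<Rightarrow> Some (cf s' (min (Suc (length x)) (mv d1 i)) (min (Suc (length y)) (mv d2 h))))"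
  unfolding tm_step_def cf_def by (auto simp: Mach_def enc_less dec_enc split: option.splits)

definition F :: "bool list \<Rightarrow> bool list \<Rightarrow> cfg \<Rightarrow> cfg" where
  "F x y c = (case tm_step Mach x y c of None \<Rightarrow> c | Some c' \<Rightarrow> c')"

lemma run_F: "tm_run Mach x y t = (F x y ^^ t) (init_cfg Mach)"
  by (induction t) (auto simp: F_def split: option.splits)

definition rch :: "bool list \<Rightarrow> bool list \<Rightarrow> cfg \<Rightarrow> cfg \<Rightarrow> bool" where
  "rch x y c c' \<longleftrightarrow> (\<exists>k. (F x y ^^ k) c = c')"

lemma rch_refl: "rch x y c c"
  unfolding rch_def by (rule exI[of _ 0]) simp

lemma rch_trans: "rch x y c1 c2 \<Longrightarrow> rch x y c2 c3 \<Longrightarrow> rch x y c1 c3"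
  unfolding rch_def by (metis funpow_add comp_apply)

lemma rch_step: "bnd s \<Longrightarrow> dl s (tape_read x i) (tape_read y h) = Some (s', d1, d2) \<Longrightarrow>
   rch x y (cf s i h) (cf s' (min (Suc (length x)) (mv d1 i)) (min (Suc (length y)) (mv d2 h)))"
  unfolding rch_def by (rule exI[of _ 1]) (simp add: F_def step_cf)

lemma halt_cf: "bnd s \<Longrightarrow> dl s (tape_read x i) (tape_read y h) = None \<Longrightarrow> tm_step Mach x y (cf s i h) = None"
  by (simp add: step_cf)

lemma F_fix: "tm_step Mach x y c = None \<Longrightarrow> (F x y ^^ k) c = c"
  by (induction k) (auto simp: F_def)

lemma accepts_iff:
  assumes "rch x y (init_cfg Mach) c" "tm_step Mach x y c = None"
  shows "tm_accepts Mach x y \<longleftrightarrow> c_state c \<in> tm_accept Mach"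
proof -
  obtain k where k: "(F x y ^^ k) (init_cfg Mach) = c" using assms(1) unfolding rch_def by blast
  have uniq: "tm_run Mach x y t = c" if "tm_step Mach x y (tm_run Mach x y t) = None" for t
  proof (cases "t \<le> k")
    case True
    then have "(F x y ^^ k) (init_cfg Mach) = (F x y ^^ (k - t)) ((F x y ^^ t) (init_cfg Mach))"
      by (metis funpow_add comp_apply le_add_diff_inverse2)
    then show ?thesis using that k F_fix by (simp add: run_F)
  next
    case False
    then have "(F x y ^^ t) (init_cfg Mach) = (F x y ^^ (t - k)) ((F x y ^^ k) (init_cfg Mach))"
      by (metis funpow_add comp_apply le_add_diff_inverse2 nat_le_linear)
    then show ?thesis using assms(2) k F_fix by (simp add: run_F)
  qed
  show ?thesis
  proof
    assume "tm_accepts Mach x y"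
    then obtain t where "tm_step Mach x y (tm_run Mach x y t) = None" "c_state (tm_run Mach x y t) \<in> tm_accept Mach"
      unfolding tm_accepts_def by blast
    then show "c_state c \<in> tm_accept Mach" using uniq by simp
  next
    assume "c_state c \<in> tm_accept Mach"
    then show "tm_accepts Mach x y" unfolding tm_accepts_def using assms(2) k
      by (metis run_F)
  qed
qed



lemma tr_app: "y = pre @ u @ post \<Longrightarrow> k < length u \<Longrightarrow> tape_read y (Suc (length pre + k)) = Sym (u ! k)"
  by (simp add: tape_read_def nth_append)

lemma tr_cons: "y = pre @ b # post \<Longrightarrow> tape_read y (Suc (length pre)) = Sym b"
  by (simp add: tape_read_def nth_append)

lemma tr_0: "tape_read y 0 = LEnd" by (simp add: tape_read_def)
lemma tr_end: "tape_read y (Suc (length y)) = REnd" by (simp add: tape_read_def)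
lemma tr_notL: "i > 0 \<Longrightarrow> tape_read y i \<noteq> LEnd" by (simp add: tape_read_def)
lemma tr_x: "i < length x \<Longrightarrow> tape_read x (Suc i) = Sym (x ! i)" by (simp add: tape_read_def)

lemma rch_step': "bnd s \<Longrightarrow> dl s (tape_read x i) (tape_read y h) = Some (s', da, db) \<Longrightarrow>
   i' = min (Suc (length x)) (mv da i) \<Longrightarrow> h' = min (Suc (length y)) (mv db h) \<Longrightarrow>
   rch x y (cf s i h) (cf s' i' h')"
  using rch_step by simp

definition zeros :: "bool list \<Rightarrow> nat" where "zeros u = length (filter (\<lambda>b. \<not> b) u)"

lemma zeros_pos: "u \<noteq> [] \<Longrightarrow> last u = False \<Longrightarrow> zeros u \<ge> 1"
proof -
  assume "u \<noteq> []" "last u = False"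
  then have "False \<in> set u" by (metis last_in_set)
  then have "\<exists>x\<in>set u. \<not> x" by (intro bexI[of _ False]) simp_all
  then have "filter (\<lambda>b. \<not> b) u \<noteq> []" by (simp add: filter_empty_conv)
  then show ?thesis unfolding zeros_def by (simp add: Suc_le_eq)
qed

lemma skip_lem:
  "(u = [] \<or> last u = False) \<Longrightarrow> zeros u \<le> m \<Longrightarrow> m < 32 \<Longrightarrow> t < 8 \<Longrightarrow> y = pre @ u @ post \<Longrightarrow>
   i \<le> Suc (length x) \<Longrightarrow>
   rch x y (cf (SKIP m t) i (Suc (length pre))) (cf (SKIP (m - zeros u) t) i (Suc (length pre + length u)))"
proof (induction u arbitrary: pre m)
  case Nil
  then show ?case by (simp add: rch_refl zeros_def)
next
  case (Cons b u)
  have m1: "m \<ge> 1"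
  proof (cases b)
    case True
    then have "u \<noteq> []" "last u = False" using Cons.prems(1) by (cases "u = []"; simp)+
    then have "zeros u \<ge> 1" by (rule zeros_pos)
    then show ?thesis using Cons.prems(2) True by (simp add: zeros_def)
  next
    case False then show ?thesis using Cons.prems(2) by (simp add: zeros_def)
  qed
  define m' where "m' = (if b then m else m - 1)"
  have y': "y = (pre @ [b]) @ u @ post" using Cons.prems by simp
  have r: "tape_read y (Suc (length pre)) = Sym b" using Cons.prems(5) by (simp add: tr_cons)
  have s1: "rch x y (cf (SKIP m t) i (Suc (length pre))) (cf (SKIP m' t) i (Suc (length (pre @ [b]))))"
    apply (rule rch_step'[where da=MoveS and db=MoveR])
    using Cons.prems m1 r by (auto simp: m'_def)
  have s2: "rch x y (cf (SKIP m' t) i (Suc (length (pre @ [b])))) (cf (SKIP (m' - zeros u) t) i (Suc (length (pre @ [b]) + length u)))"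
    apply (rule Cons.IH[OF _ _ _ _ y'])
    using Cons.prems m1 by (auto simp: m'_def zeros_def split: if_splits)
  have "m' - zeros u = m - zeros (b # u)" using m1 by (simp add: m'_def zeros_def)
  then show ?case using rch_trans[OF s1 s2] by simp
qed

lemma skip0: "t < 8 \<Longrightarrow> i \<le> Suc (length x) \<Longrightarrow> h \<le> Suc (length y) \<Longrightarrow>
  rch x y (cf (SKIP 0 t) i h) (cf (ENTRY t) i h)"
  by (rule rch_step'[where da=MoveS and db=MoveS]) auto

lemma rewind: "i \<le> Suc (length x) \<Longrightarrow> j < 8 \<Longrightarrow> h \<le> Suc (length y) \<Longrightarrow>
  rch x y (cf (REWIND j) i h) (cf (COUNT j) 0 h)"
proof (induction i)
  case 0
  show ?case by (rule rch_step'[where da=MoveS and db=MoveS]) (use 0 in \<open>auto simp: tr_0\<close>)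
next
  case (Suc i)
  have "rch x y (cf (REWIND j) (Suc i) h) (cf (REWIND j) i h)"
    by (rule rch_step'[where da=MoveL and db=MoveS]) (use Suc in \<open>auto simp: tr_notL\<close>)
  then show ?case using Suc rch_trans by simp
qed

lemma count: "y = pre @ replicate k True @ post \<Longrightarrow> i + k \<le> Suc (length x) \<Longrightarrow> j < 8 \<Longrightarrow>
  rch x y (cf (COUNT j) i (Suc (length pre))) (cf (COUNT j) (i + k) (Suc (length pre + k)))"
proof (induction k arbitrary: i pre)
  case 0 then show ?case by (simp add: rch_refl)
next
  case (Suc k)
  have y': "y = (pre @ [True]) @ replicate k True @ post" using Suc.prems by simp
  have "rch x y (cf (COUNT j) i (Suc (length pre))) (cf (COUNT j) (Suc i) (Suc (length (pre @ [True]))))"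
    by (rule rch_step'[where da=MoveR and db=MoveR]) (use Suc.prems in \<open>auto simp: tr_cons\<close>)
  moreover have "rch x y (cf (COUNT j) (Suc i) (Suc (length (pre @ [True])))) (cf (COUNT j) (Suc i + k) (Suc (length (pre @ [True]) + k)))"
    by (rule Suc.IH[OF y']) (use Suc.prems in auto)
  ultimately show ?case using rch_trans by simp
qed

lemma tgta: "y = pre @ replicate k True @ post \<Longrightarrow> t < 8 \<Longrightarrow> (if bt then t else t + k) < 8 \<Longrightarrow> j < 8 \<Longrightarrow> i \<le> Suc (length x) \<Longrightarrow>
  rch x y (cf (TGTA j bt t) i (Suc (length pre))) (cf (TGTA j bt (if bt then t else t + k)) i (Suc (length pre + k)))"
proof (induction k arbitrary: t pre)
  case 0 then show ?case by (simp add: rch_refl)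
next
  case (Suc k)
  have y': "y = (pre @ [True]) @ replicate k True @ post" using Suc.prems by simp
  have "rch x y (cf (TGTA j bt t) i (Suc (length pre))) (cf (TGTA j bt (if bt then t else Suc t)) i (Suc (length (pre @ [True]))))"
    by (rule rch_step'[where da=MoveS and db=MoveR]) (use Suc.prems in \<open>auto simp: tr_cons\<close>)
  moreover have "rch x y (cf (TGTA j bt (if bt then t else Suc t)) i (Suc (length (pre @ [True])))) (cf (TGTA j bt (if bt then (if bt then t else Suc t) else (if bt then t else Suc t) + k)) i (Suc (length (pre @ [True]) + k)))"
    by (rule Suc.IH[OF y']) (use Suc.prems in \<open>auto split: if_splits\<close>)
  ultimately show ?case using rch_trans by (cases bt) auto
qed

lemma tgtb: "y = pre @ replicate k True @ post \<Longrightarrow> t < 8 \<Longrightarrow> (if bt then t + k else t) < 8 \<Longrightarrow> j < 8 \<Longrightarrow> i \<le> Suc (length x) \<Longrightarrow>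
  rch x y (cf (TGTB j bt t) i (Suc (length pre))) (cf (TGTB j bt (if bt then t + k else t)) i (Suc (length pre + k)))"
proof (induction k arbitrary: t pre)
  case 0 then show ?case by (simp add: rch_refl)
next
  case (Suc k)
  have y': "y = (pre @ [True]) @ replicate k True @ post" using Suc.prems by simp
  have "rch x y (cf (TGTB j bt t) i (Suc (length pre))) (cf (TGTB j bt (if bt then Suc t else t)) i (Suc (length (pre @ [True]))))"
    by (rule rch_step'[where da=MoveS and db=MoveR]) (use Suc.prems in \<open>auto simp: tr_cons\<close>)
  moreover have "rch x y (cf (TGTB j bt (if bt then Suc t else t)) i (Suc (length (pre @ [True])))) (cf (TGTB j bt (if bt then (if bt then Suc t else t) + k else (if bt then Suc t else t))) i (Suc (length (pre @ [True]) + k)))"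
    by (rule Suc.IH[OF y']) (use Suc.prems in \<open>auto split: if_splits\<close>)
  ultimately show ?case using rch_trans by (cases bt) auto
qed

definition entry :: "nat \<Rightarrow> nat \<Rightarrow> nat \<Rightarrow> bool list" where
  "entry p q r = replicate p True @ False # replicate q True @ False # replicate r True @ [False]"

lemma entry_inner:
  assumes y: "y = pre @ entry (Suc i0) q r @ post" and i0: "i0 < length x"
    and ih: "ih \<le> Suc (length x)" and j: "j \<le> 4" and q: "q \<le> 4" and r: "r \<le> 4"
  shows "rch x y (cf (ENTRY j) ih (Suc (length pre)))
     (cf (SKIP (3 * (4 - j) + 3 * (if x ! i0 then r else q)) (if x ! i0 then r else q)) (Suc i0)
         (Suc (length pre + length (entry (Suc i0) q r))))"
proof -
  let ?P = "Suc (length pre)"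
  let ?b = "x ! i0"
  have ylen: "length y \<ge> length pre + length (entry (Suc i0) q r)" using y by simp
  have c1: "rch x y (cf (ENTRY j) ih ?P) (cf (REWIND j) ih ?P)"
    by (rule rch_step'[where da=MoveS and db=MoveS])
       (use y ih j in \<open>auto simp: entry_def tr_cons min_def\<close>)
  have c2: "rch x y (cf (REWIND j) ih ?P) (cf (COUNT j) 0 ?P)"
    by (rule rewind) (use ih j ylen in auto)
  have y3: "y = pre @ replicate (Suc i0) True @ (False # replicate q True @ False # replicate r True @ [False] @ post)"
    using y by (simp add: entry_def)
  have c3: "rch x y (cf (COUNT j) 0 ?P) (cf (COUNT j) (0 + Suc i0) (Suc (length pre + Suc i0)))"
    by (rule count[OF y3]) (use i0 j in auto)
  define pre2 where "pre2 = pre @ replicate (Suc i0) True @ [False]"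
  have y4: "y = pre2 @ replicate q True @ (False # replicate r True @ [False] @ post)"
    using y by (simp add: entry_def pre2_def)
  have c4: "rch x y (cf (COUNT j) (Suc i0) (Suc (length pre + Suc i0))) (cf (TGTA j ?b 0) (Suc i0) (Suc (length pre2)))"
  proof (rule rch_step'[where da=MoveS and db=MoveR])
    have "y = (pre @ replicate (Suc i0) True) @ False # (replicate q True @ False # replicate r True @ [False] @ post)"
      using y by (simp add: entry_def)
    from tr_cons[OF this] have "tape_read y (Suc (length pre + Suc i0)) = Sym False" by simp
    then show "dl (COUNT j) (tape_read x (Suc i0)) (tape_read y (Suc (length pre + Suc i0))) = Some (TGTA j ?b 0, MoveS, MoveR)"
      using i0 by (simp add: tr_x)
  qed (use j i0 ylen in \<open>auto simp: pre2_def entry_def\<close>)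
  have c5: "rch x y (cf (TGTA j ?b 0) (Suc i0) (Suc (length pre2))) (cf (TGTA j ?b (if ?b then 0 else 0 + q)) (Suc i0) (Suc (length pre2 + q)))"
    by (rule tgta[OF y4]) (use q j i0 in auto)
  define pre3 where "pre3 = pre2 @ replicate q True @ [False]"
  have y6: "y = pre3 @ replicate r True @ ([False] @ post)"
    using y by (simp add: entry_def pre2_def pre3_def)
  have c6: "rch x y (cf (TGTA j ?b (if ?b then 0 else q)) (Suc i0) (Suc (length pre2 + q))) (cf (TGTB j ?b (if ?b then 0 else q)) (Suc i0) (Suc (length pre3)))"
  proof (rule rch_step'[where da=MoveS and db=MoveR])
    have "y = (pre2 @ replicate q True) @ False # (replicate r True @ [False] @ post)"
      using y4 by simp
    from tr_cons[OF this] have "tape_read y (Suc (length pre2 + q)) = Sym False" by simp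
    then show "dl (TGTA j ?b (if ?b then 0 else q)) (tape_read x (Suc i0)) (tape_read y (Suc (length pre2 + q))) = Some (TGTB j ?b (if ?b then 0 else q), MoveS, MoveR)"
      by simp
  qed (use j q i0 y in \<open>auto simp: pre3_def pre2_def entry_def\<close>)
  have c7: "rch x y (cf (TGTB j ?b (if ?b then 0 else q)) (Suc i0) (Suc (length pre3))) (cf (TGTB j ?b (if ?b then (if ?b then 0 else q) + r else (if ?b then 0 else q))) (Suc i0) (Suc (length pre3 + r)))"
    by (rule tgtb[OF y6]) (use q r j i0 in auto)
  have c8: "rch x y (cf (TGTB j ?b (if ?b then (if ?b then 0 else q) + r else (if ?b then 0 else q))) (Suc i0) (Suc (length pre3 + r)))
     (cf (SKIP (3 * (4 - j) + 3 * (if ?b then r else q)) (if ?b then r else q)) (Suc i0) (Suc (Suc (length pre3 + r))))"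
  proof (rule rch_step'[where da=MoveS and db=MoveR])
    have "y = (pre3 @ replicate r True) @ False # post"
      using y6 by simp
    from tr_cons[OF this] have "tape_read y (Suc (length pre3 + r)) = Sym False" by simp
    then show "dl (TGTB j ?b (if ?b then (if ?b then 0 else q) + r else (if ?b then 0 else q))) (tape_read x (Suc i0)) (tape_read y (Suc (length pre3 + r))) = Some (SKIP (3 * (4 - j) + 3 * (if ?b then r else q)) (if ?b then r else q), MoveS, MoveR)"
      by simp
  qed (use j q r i0 y in \<open>auto simp: pre3_def pre2_def entry_def\<close>)
  have "Suc (Suc (length pre3 + r)) = Suc (length pre + length (entry (Suc i0) q r))"
    by (simp add: pre3_def pre2_def entry_def)
  then show ?thesis using c1 c2 c3 c4 c5 c6 c7 c8 rch_trans by (metis add_0)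
qed

lemma entry_sink:
  assumes y: "y = pre @ entry 0 q r @ post" and ih: "ih \<le> Suc (length x)" and j: "j < 8"
  shows "rch x y (cf (ENTRY j) ih (Suc (length pre))) (cf (if q > 0 then ACC else REJ) ih (Suc (Suc (length pre))))"
proof -
  have c1: "rch x y (cf (ENTRY j) ih (Suc (length pre))) (cf LABEL ih (Suc (Suc (length pre))))"
  proof (rule rch_step'[where da=MoveS and db=MoveR])
    have "y = pre @ False # (replicate q True @ False # replicate r True @ [False] @ post)" using y by (simp add: entry_def)
    from tr_cons[OF this] show "dl (ENTRY j) (tape_read x ih) (tape_read y (Suc (length pre))) = Some (LABEL, MoveS, MoveR)" by simp
  qed (use y ih j in \<open>auto simp: entry_def\<close>)
  have y2: "y = (pre @ [False]) @ (replicate q True @ False # replicate r True @ [False]) @ post"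
    using y by (simp add: entry_def)
  have rd: "tape_read y (Suc (Suc (length pre))) = Sym (q > 0)"
  proof (cases q)
    case 0
    then have "y = (pre @ [False]) @ False # (replicate r True @ [False] @ post)" using y by (simp add: entry_def)
    from tr_cons[OF this] show ?thesis using 0 by simp
  next
    case (Suc q')
    then have "y = (pre @ [False]) @ True # (replicate q' True @ False # replicate r True @ [False] @ post)" using y by (simp add: entry_def)
    from tr_cons[OF this] show ?thesis using Suc by simp
  qed
  have c2: "rch x y (cf LABEL ih (Suc (Suc (length pre)))) (cf (if q > 0 then ACC else REJ) ih (Suc (Suc (length pre))))"
    by (rule rch_step'[where da=MoveS and db=MoveS]) (use y ih rd in \<open>auto simp: entry_def\<close>)
  show ?thesis using rch_trans[OF c1 c2] .
qed



definition levp :: "bp \<Rightarrow> (nat \<Rightarrow> nat) \<Rightarrow> bool" where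
  "levp B lev \<longleftrightarrow> (\<forall>v < bp_size B. \<forall>i a b. bp_nodes B ! v = Inner i a b \<longrightarrow>
            lev a = Suc (lev v) \<and> lev b = Suc (lev v)) \<and>
        (\<forall>l. card {v. v < bp_size B \<and> lev v = l} \<le> 5)"

definition LV :: "bp \<Rightarrow> nat \<Rightarrow> nat" where "LV B = (SOME lev. levp B lev)"

lemma LV_levp: "width5_bp n B \<Longrightarrow> levp B (LV B)"
proof -
  assume "width5_bp n B"
  then have "\<exists>lev. levp B lev" unfolding width5_bp_def levp_def by blast
  then show ?thesis unfolding LV_def by (rule someI_ex)
qed

definition SL :: "bp \<Rightarrow> nat \<Rightarrow> nat list" where
  "SL B t = (if t = 0 then [bp_start B] else
     sorted_list_of_set {v. v < bp_size B \<and> LV B v = LV B (bp_start B) + t})"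

definition idx :: "nat list \<Rightarrow> nat \<Rightarrow> nat" where
  "idx L w = (SOME k. k < length L \<and> L ! k = w)"

lemma idx: "w \<in> set L \<Longrightarrow> idx L w < length L \<and> L ! idx L w = w"
  unfolding idx_def by (rule someI_ex) (simp add: in_set_conv_nth)

definition code :: "bp \<Rightarrow> nat \<Rightarrow> nat \<Rightarrow> bool list" where
  "code B t v = (case bp_nodes B ! v of
      Sink b \<Rightarrow> entry 0 (if b then 1 else 0) 0
    | Inner i a b \<Rightarrow> entry (Suc i) (idx (SL B (Suc t)) a) (idx (SL B (Suc t)) b))"

definition ent :: "bp \<Rightarrow> nat \<Rightarrow> nat \<Rightarrow> bool list" where
  "ent B t k = (if k < length (SL B t) then code B t (SL B t ! k) else entry 0 0 0)"

definition blk :: "bp \<Rightarrow> nat \<Rightarrow> bool list" where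
  "blk B t = concat (map (ent B t) [0..<5])"

definition adv :: "bp \<Rightarrow> bool list" where
  "adv B = concat (map (blk B) [0..<Suc (bp_size B)])"

definition PP :: "bp \<Rightarrow> bool list \<Rightarrow> nat \<Rightarrow> nat" where
  "PP B x t = (bp_step B x ^^ t) (bp_start B)"

definition inner :: "bpnode \<Rightarrow> bool" where
  "inner nd \<longleftrightarrow> (\<exists>i a b. nd = Inner i a b)"

lemma SL_len: "width5_bp n B \<Longrightarrow> length (SL B t) \<le> 5"
proof -
  assume w: "width5_bp n B"
  show ?thesis
  proof (cases "t = 0")
    case True then show ?thesis by (simp add: SL_def)
  next
    case False
    have "card {v. v < bp_size B \<and> LV B v = LV B (bp_start B) + t} \<le> 5"
      using LV_levp[OF w] unfolding levp_def by blast
    then show ?thesis using False by (simp add: SL_def)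
  qed
qed

lemma SL_set: "t > 0 \<Longrightarrow> set (SL B t) = {v. v < bp_size B \<and> LV B v = LV B (bp_start B) + t}"
  unfolding SL_def by simp

lemma SL_sub: "width5_bp n B \<Longrightarrow> v \<in> set (SL B t) \<Longrightarrow> v < bp_size B"
proof -
  assume w: "width5_bp n B" and v: "v \<in> set (SL B t)"
  show ?thesis
  proof (cases "t = 0")
    case True
    then have "v = bp_start B" using v by (simp add: SL_def)
    then show ?thesis using w by (simp add: width5_bp_def bp_wf_def)
  next
    case False
    then show ?thesis using v SL_set[of t B] by simp
  qed
qed

lemma path_props:
  assumes w: "width5_bp n B"
  shows "(\<forall>s<t. inner (bp_nodes B ! PP B x s)) \<Longrightarrow> PP B x t < bp_size B \<and> LV B (PP B x t) = LV B (bp_start B) + t"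
proof (induction t)
  case 0 then show ?case using w by (simp add: PP_def width5_bp_def bp_wf_def)
next
  case (Suc t)
  then have ih: "PP B x t < bp_size B" "LV B (PP B x t) = LV B (bp_start B) + t" by auto
  from Suc.prems obtain i a b where nd: "bp_nodes B ! PP B x t = Inner i a b"
    unfolding inner_def by blast
  have st: "PP B x (Suc t) = (if x ! i then b else a)"
    using nd by (simp add: PP_def bp_step_def)
  have "a < bp_size B \<and> b < bp_size B" using w ih nd unfolding width5_bp_def bp_wf_def by blast
  moreover have "LV B a = Suc (LV B (PP B x t)) \<and> LV B b = Suc (LV B (PP B x t))"
    using LV_levp[OF w] ih nd unfolding levp_def by blast
  ultimately show ?case using st ih by simp
qed

lemma path_in:
  assumes w: "width5_bp n B" and "\<forall>s<t. inner (bp_nodes B ! PP B x s)"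
  shows "PP B x t \<in> set (SL B t)"
proof (cases "t = 0")
  case True then show ?thesis by (simp add: SL_def PP_def)
next
  case False
  then show ?thesis using path_props[OF w assms(2)] SL_set[of t B] by simp
qed

lemma zeros_app: "zeros (u @ v) = zeros u + zeros v" by (simp add: zeros_def)

lemma zeros_entry: "zeros (entry p q r) = 3" by (simp add: zeros_def entry_def)

lemma zeros_concat: "(\<forall>u\<in>set us. zeros u = 3) \<Longrightarrow> zeros (concat us) = 3 * length us"
  by (induction us) (auto simp: zeros_app, simp add: zeros_def)

lemma last_concat: "(\<forall>u\<in>set us. u \<noteq> [] \<and> last u = False) \<Longrightarrow> concat us = [] \<or> last (concat us) = False"
  by (induction us) (auto simp: last_append)

lemma entry_ne: "entry p q r \<noteq> [] \<and> last (entry p q r) = False" by (simp add: entry_def)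

lemma ent_entry: "\<exists>p q r. ent B t k = entry p q r"
  unfolding ent_def code_def by (auto split: bpnode.splits)

lemma upt5_split: "j < (5::nat) \<Longrightarrow> [0..<5] = [0..<j] @ j # [Suc j..<5]"
  by (metis upt_add_eq_append upt_conv_Cons zero_le less_imp_le_nat add_0 le_add_diff_inverse)

lemma blk_split: "j < 5 \<Longrightarrow> blk B t = concat (map (ent B t) [0..<j]) @ ent B t j @ concat (map (ent B t) [Suc j..<5])"
  unfolding blk_def by (subst upt5_split) auto

lemma adv_split: "t \<le> bp_size B \<Longrightarrow> adv B = concat (map (blk B) [0..<t]) @ blk B t @ concat (map (blk B) [Suc t..<Suc (bp_size B)])"
proof -
  assume "t \<le> bp_size B"
  then have "[0..<Suc (bp_size B)] = [0..<t] @ t # [Suc t..<Suc (bp_size B)]"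
    by (metis le_imp_less_Suc upt_add_eq_append upt_conv_Cons zero_le le_add_diff_inverse add_0 less_imp_le_nat)
  then show ?thesis unfolding adv_def by simp
qed

lemma zeros_ents: "zeros (concat (map (ent B t) L)) = 3 * length L"
  by (rule trans[OF zeros_concat]) (auto, metis ent_entry zeros_entry)

lemma last_ents: "concat (map (ent B t) L) = [] \<or> last (concat (map (ent B t) L)) = False"
  by (rule last_concat) (auto, (metis ent_entry entry_ne)+)



lemma rch_trans_eq: "rch x y c1 c2 \<Longrightarrow> c2 = c2' \<Longrightarrow> rch x y c2' c3 \<Longrightarrow> rch x y c1 c3"
  using rch_trans by blast

definition Inv :: "bp \<Rightarrow> bool list \<Rightarrow> nat \<Rightarrow> bool" where
  "Inv B x t \<longleftrightarrow> (\<exists>ih j. ih \<le> Suc (length x) \<and> j < length (SL B t) \<and> SL B t ! j = PP B x t \<and>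
     rch x (adv B) (cf S0 0 0) (cf (SKIP (3 * j) j) ih (Suc (length (concat (map (blk B) [0..<t]))))))"

lemma Inv0:
  assumes n: "length x \<ge> 3"
  shows "Inv B x 0"
proof -
  let ?y = "adv B"
  have a1: "rch x ?y (cf S0 0 0) (cf S1 1 0)"
    by (rule rch_step'[where da=MoveR and db=MoveS]) (use n in auto)
  have a2: "rch x ?y (cf S1 1 0) (cf S2 2 0)"
    by (rule rch_step'[where da=MoveR and db=MoveS]) (use n in auto)
  have r2: "tape_read x 2 \<noteq> REnd" "tape_read x 3 \<noteq> REnd" using n by (auto simp: tape_read_def)
  have a3: "rch x ?y (cf S2 2 0) (cf S3 3 0)"
    by (rule rch_step'[where da=MoveR and db=MoveS]) (use n r2 in auto)
  have a4: "rch x ?y (cf S3 3 0) (cf (SKIP 0 0) 3 1)"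
    by (rule rch_step'[where da=MoveS and db=MoveR]) (use n r2 in auto)
  have rr: "rch x ?y (cf S0 0 0) (cf (SKIP (3 * 0) 0) 3 (Suc (length (concat (map (blk B) [0..<0])))))"
    using rch_trans[OF a1 rch_trans[OF a2 rch_trans[OF a3 a4]]] by simp
  have sl: "SL B 0 = [bp_start B]" by (simp add: SL_def)
  have pp: "PP B x 0 = bp_start B" by (simp add: PP_def)
  show ?thesis unfolding Inv_def
  proof (rule exI[of _ "3::nat"], rule exI[of _ "0::nat"], intro conjI)
    show "3 \<le> Suc (length x)" using n by simp
    show "0 < length (SL B 0)" by (simp add: sl)
    show "SL B 0 ! 0 = PP B x 0" by (simp add: sl pp)
  qed (rule rr)
qed

lemma to_entry:
  assumes w: "width5_bp (length x) B" and inv: "Inv B x t" and t: "t \<le> bp_size B"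
  shows "\<exists>ih j. ih \<le> Suc (length x) \<and> j < length (SL B t) \<and> SL B t ! j = PP B x t \<and>
     adv B = (concat (map (blk B) [0..<t]) @ concat (map (ent B t) [0..<j])) @ ent B t j @
             (concat (map (ent B t) [Suc j..<5]) @ concat (map (blk B) [Suc t..<Suc (bp_size B)])) \<and>
     rch x (adv B) (cf S0 0 0) (cf (ENTRY j) ih (Suc (length (concat (map (blk B) [0..<t]) @ concat (map (ent B t) [0..<j])))))"
proof -
  obtain ih j where ih: "ih \<le> Suc (length x)" and j: "j < length (SL B t)" and sj: "SL B t ! j = PP B x t"
    and r0: "rch x (adv B) (cf S0 0 0) (cf (SKIP (3 * j) j) ih (Suc (length (concat (map (blk B) [0..<t])))))"
    using inv unfolding Inv_def by blast
  have j5: "j < 5" using j SL_len[OF w, of t] by linarith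
  let ?pre = "concat (map (blk B) [0..<t])"
  let ?E1 = "concat (map (ent B t) [0..<j])"
  have y: "adv B = (?pre @ ?E1) @ ent B t j @
             (concat (map (ent B t) [Suc j..<5]) @ concat (map (blk B) [Suc t..<Suc (bp_size B)]))"
    using adv_split[OF t] blk_split[OF j5] by simp
  have y1: "adv B = ?pre @ ?E1 @ (ent B t j @
             (concat (map (ent B t) [Suc j..<5]) @ concat (map (blk B) [Suc t..<Suc (bp_size B)])))"
    using y by simp
  have r1: "rch x (adv B) (cf (SKIP (3 * j) j) ih (Suc (length ?pre))) (cf (SKIP (3 * j - zeros ?E1) j) ih (Suc (length ?pre + length ?E1)))"
    by (rule skip_lem[OF _ _ _ _ y1]) (use last_ents[of B t "[0..<j]"] j5 ih in \<open>simp_all add: zeros_ents\<close>)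
  have r2: "rch x (adv B) (cf (SKIP 0 j) ih (Suc (length ?pre + length ?E1))) (cf (ENTRY j) ih (Suc (length ?pre + length ?E1)))"
    by (rule skip0) (use j5 ih y in auto)
  have r12: "rch x (adv B) (cf (SKIP (3 * j) j) ih (Suc (length ?pre))) (cf (ENTRY j) ih (Suc (length ?pre + length ?E1)))"
    by (rule rch_trans_eq[OF r1 _ r2]) (simp add: zeros_ents)
  have "rch x (adv B) (cf S0 0 0) (cf (ENTRY j) ih (Suc (length (?pre @ ?E1))))"
    using rch_trans[OF r0 r12] by simp
  then show ?thesis using ih j sj y by blast
qed

lemma Inv_step:
  assumes w: "width5_bp (length x) B" and inv: "Inv B x t" and t: "t \<le> bp_size B"
    and inn: "\<forall>s\<le>t. inner (bp_nodes B ! PP B x s)"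
  shows "Inv B x (Suc t)"
proof -
  obtain ih j where ih: "ih \<le> Suc (length x)" and j: "j < length (SL B t)" and sj: "SL B t ! j = PP B x t"
    and y: "adv B = (concat (map (blk B) [0..<t]) @ concat (map (ent B t) [0..<j])) @ ent B t j @
             (concat (map (ent B t) [Suc j..<5]) @ concat (map (blk B) [Suc t..<Suc (bp_size B)]))"
    and r0: "rch x (adv B) (cf S0 0 0) (cf (ENTRY j) ih (Suc (length (concat (map (blk B) [0..<t]) @ concat (map (ent B t) [0..<j])))))"
    using to_entry[OF w inv t] by blast
  let ?pre = "concat (map (blk B) [0..<t]) @ concat (map (ent B t) [0..<j])"
  let ?E2 = "concat (map (ent B t) [Suc j..<5])"
  let ?rest = "concat (map (blk B) [Suc t..<Suc (bp_size B)])"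
  have j5: "j < 5" using j SL_len[OF w, of t] by linarith
  obtain i a b where nd: "bp_nodes B ! PP B x t = Inner i a b" using inn unfolding inner_def by blast
  have lt: "PP B x t < bp_size B" using path_props[OF w, of t x] inn by auto
  have i: "i < length x" using w lt nd unfolding width5_bp_def bp_wf_def by blast
  let ?S' = "SL B (Suc t)"
  have nxt: "PP B x (Suc t) = (if x ! i then b else a)" using nd by (simp add: PP_def bp_step_def)
  have inS: "PP B x (Suc t) \<in> set ?S'" by (rule path_in[OF w]) (use inn in auto)
  have lenS: "length ?S' \<le> 5" by (rule SL_len[OF w])
  have ainS: "a \<in> set ?S'" "b \<in> set ?S'"
  proof -
    have "a < bp_size B \<and> b < bp_size B" using w lt nd unfolding width5_bp_def bp_wf_def by blast
    moreover have "LV B a = Suc (LV B (PP B x t)) \<and> LV B b = Suc (LV B (PP B x t))"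
      using LV_levp[OF w] lt nd unfolding levp_def by blast
    moreover have "LV B (PP B x t) = LV B (bp_start B) + t" using path_props[OF w, of t x] inn by auto
    ultimately show "a \<in> set ?S'" "b \<in> set ?S'" by (auto simp: SL_def)
  qed
  have qa: "idx ?S' a \<le> 4" "idx ?S' b \<le> 4" using idx[OF ainS(1)] idx[OF ainS(2)] lenS by auto
  have e: "ent B t j = entry (Suc i) (idx ?S' a) (idx ?S' b)"
    using j sj nd by (simp add: ent_def code_def)
  define tt where "tt = (if x ! i then idx ?S' b else idx ?S' a)"
  have tt: "tt = idx ?S' (PP B x (Suc t))" using nxt by (simp add: tt_def)
  have tt5: "tt < length ?S'" "?S' ! tt = PP B x (Suc t)" using idx[OF inS] tt by auto
  have y2: "adv B = ?pre @ entry (Suc i) (idx ?S' a) (idx ?S' b) @ (?E2 @ ?rest)" using y e by simp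
  have r1: "rch x (adv B) (cf (ENTRY j) ih (Suc (length ?pre)))
     (cf (SKIP (3 * (4 - j) + 3 * tt) tt) (Suc i) (Suc (length ?pre + length (entry (Suc i) (idx ?S' a) (idx ?S' b)))))"
    unfolding tt_def by (rule entry_inner[OF y2 i ih]) (use j5 qa in auto)
  have y3: "adv B = (?pre @ ent B t j) @ ?E2 @ ?rest" using y by simp
  have tt4: "tt \<le> 4" using tt5 lenS by simp
  have r2: "rch x (adv B) (cf (SKIP (3 * (4 - j) + 3 * tt) tt) (Suc i) (Suc (length (?pre @ ent B t j))))
     (cf (SKIP (3 * (4 - j) + 3 * tt - zeros ?E2) tt) (Suc i) (Suc (length (?pre @ ent B t j) + length ?E2)))"
    by (rule skip_lem[OF _ _ _ _ y3]) (use last_ents[of B t "[Suc j..<5]"] j5 tt4 i in \<open>simp_all add: zeros_ents\<close>)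
  have z: "3 * (4 - j) + 3 * tt - zeros ?E2 = 3 * tt" using j5 by (simp add: zeros_ents)
  have len: "length (?pre @ ent B t j) + length ?E2 = length (concat (map (blk B) [0..<Suc t]))"
    using blk_split[OF j5, of B t] by simp
  have r12: "rch x (adv B) (cf (ENTRY j) ih (Suc (length ?pre))) (cf (SKIP (3 * (4 - j) + 3 * tt - zeros ?E2) tt) (Suc i) (Suc (length (?pre @ ent B t j) + length ?E2)))"
    by (rule rch_trans_eq[OF r1 _ r2]) (simp add: e add.assoc)
  have "rch x (adv B) (cf S0 0 0) (cf (SKIP (3 * tt) tt) (Suc i) (Suc (length (concat (map (blk B) [0..<Suc t])))))"
  proof -
    have eq: "cf (SKIP (3 * (4 - j) + 3 * tt - zeros ?E2) tt) (Suc i) (Suc (length (?pre @ ent B t j) + length ?E2)) = cf (SKIP (3 * tt) tt) (Suc i) (Suc (length (concat (map (blk B) [0..<Suc t]))))"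
      by (simp only: z len)
    show ?thesis by (rule rch_trans_eq[OF rch_trans[OF r0 r12] eq rch_refl])
  qed
  then show ?thesis unfolding Inv_def using tt5 i by (intro exI[of _ "Suc i"] exI[of _ tt]) auto
qed

lemma Inv_sink:
  assumes w: "width5_bp (length x) B" and inv: "Inv B x t" and t: "t \<le> bp_size B"
    and nd: "bp_nodes B ! PP B x t = Sink bb"
  shows "\<exists>ih h. rch x (adv B) (cf S0 0 0) (cf (if bb then ACC else REJ) ih h)"
proof -
  obtain ih j where ih: "ih \<le> Suc (length x)" and j: "j < length (SL B t)" and sj: "SL B t ! j = PP B x t"
    and y: "adv B = (concat (map (blk B) [0..<t]) @ concat (map (ent B t) [0..<j])) @ ent B t j @
             (concat (map (ent B t) [Suc j..<5]) @ concat (map (blk B) [Suc t..<Suc (bp_size B)]))"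
    and r0: "rch x (adv B) (cf S0 0 0) (cf (ENTRY j) ih (Suc (length (concat (map (blk B) [0..<t]) @ concat (map (ent B t) [0..<j])))))"
    using to_entry[OF w inv t] by blast
  have j5: "j < 5" using j SL_len[OF w, of t] by linarith
  have e: "ent B t j = entry 0 (if bb then 1 else 0) 0"
    using j sj nd by (simp add: ent_def code_def)
  have y2: "adv B = (concat (map (blk B) [0..<t]) @ concat (map (ent B t) [0..<j])) @ entry 0 (if bb then 1 else 0) 0 @
             (concat (map (ent B t) [Suc j..<5]) @ concat (map (blk B) [Suc t..<Suc (bp_size B)]))"
    using y e by simp
  have j8: "j < 8" using j5 by simp
  note r1 = entry_sink[OF y2 ih j8]
  obtain h where "rch x (adv B) (cf S0 0 0) (cf (if 0 < (if bb then 1 else 0::nat) then ACC else REJ) ih h)"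
    using rch_trans[OF r0 r1] by blast
  moreover have "(if 0 < (if bb then 1 else 0::nat) then ACC else REJ) = (if bb then ACC else REJ)" by simp
  ultimately have "rch x (adv B) (cf S0 0 0) (cf (if bb then ACC else REJ) ih h)" by (simp only:)
  then show ?thesis by blast
qed

lemma Inv_end:
  assumes w: "width5_bp (length x) B" and inv: "Inv B x (Suc (bp_size B))"
  shows "\<exists>ih h. rch x (adv B) (cf S0 0 0) (cf REJ ih h)"
proof -
  obtain ih j where ih: "ih \<le> Suc (length x)" and j: "j < length (SL B (Suc (bp_size B)))"
    and r0: "rch x (adv B) (cf S0 0 0) (cf (SKIP (3 * j) j) ih (Suc (length (concat (map (blk B) [0..<Suc (bp_size B)])))))"
    using inv unfolding Inv_def by blast
  have j5: "j < 5" using j SL_len[OF w] by (meson order_less_le_trans)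
  have h: "Suc (length (concat (map (blk B) [0..<Suc (bp_size B)]))) = Suc (length (adv B))"
    by (simp add: adv_def)
  show ?thesis
  proof (cases "j = 0")
    case True
    have r1: "rch x (adv B) (cf (SKIP 0 0) ih (Suc (length (adv B)))) (cf (ENTRY 0) ih (Suc (length (adv B))))"
      by (rule skip0) (use ih in auto)
    have r2: "rch x (adv B) (cf (ENTRY 0) ih (Suc (length (adv B)))) (cf REJ ih (Suc (length (adv B))))"
      by (rule rch_step'[where da=MoveS and db=MoveS]) (use ih in \<open>auto simp: tr_end\<close>)
    have "rch x (adv B) (cf S0 0 0) (cf REJ ih (Suc (length (adv B))))"
      by (rule rch_trans_eq[OF r0 _ rch_trans[OF r1 r2]]) (simp only: True h mult_0_right)
    then show ?thesis by blast
  next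
    case False
    have r1: "rch x (adv B) (cf (SKIP (3 * j) j) ih (Suc (length (adv B)))) (cf REJ ih (Suc (length (adv B))))"
      by (rule rch_step'[where da=MoveS and db=MoveS]) (use ih False j5 in \<open>auto simp: tr_end\<close>)
    have "rch x (adv B) (cf S0 0 0) (cf REJ ih (Suc (length (adv B))))"
      by (rule rch_trans_eq[OF r0 _ r1]) (simp only: h)
    then show ?thesis by blast
  qed
qed



lemma log23: "log 2 (3::real) \<ge> 3/2"
proof -
  have "(2::real) powr (3/2) = 2 powr (1 + 1/2)" by simp
  also have "\<dots> = 2 powr 1 * 2 powr (1/2)" by (rule powr_add)
  also have "\<dots> = 2 * sqrt 2" by (simp add: powr_half_sqrt)
  also have "\<dots> \<le> 3"
  proof -
    have "sqrt 2 \<le> sqrt ((3/2)^2)" by (subst real_sqrt_le_iff) (simp add: power2_eq_square)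
    then show ?thesis by simp
  qed
  finally have "(2::real) powr (3/2) \<le> 3" .
  then have "log 2 (2 powr (3/2)) \<le> log 2 (3::real)" by (subst log_le_cancel_iff) auto
  then show ?thesis by simp
qed

lemma bound_arith:
  fixes S n :: nat and c :: real
  assumes n: "n \<ge> 3" and S: "real S \<le> 2 powr ((log 2 (real n)) powr c)"
  shows "real ((S + 1) * 5 * (n + 11)) \<le> 2 powr ((log 2 (real n)) powr (max c 1 + 6))"
proof -
  define L where "L = log 2 (real n)"
  define C where "C = max c 1"
  have "log 2 3 \<le> log 2 (real n)" using n by (subst log_le_cancel_iff) auto
  then have L: "L \<ge> 3/2" unfolding L_def using log23 by linarith
  have L1: "L \<ge> 1" using L by simp
  have nL: "real n = 2 powr L" unfolding L_def using n by simp
  have X: "L powr c \<le> L powr C" unfolding C_def using L1 by (intro powr_mono) auto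
  have XL: "L \<le> L powr C"
  proof -
    have "L powr 1 \<le> L powr C" unfolding C_def using L1 by (intro powr_mono) auto
    then show ?thesis using L1 by simp
  qed
  define X where "X = L powr C"
  have S2: "real S + 1 \<le> 2 powr (X + 1)"
  proof -
    have "real S \<le> 2 powr X" using S X unfolding L_def X_def by (smt (verit) powr_mono one_le_numeral)
    moreover have "1 \<le> 2 powr X" using XL L1 unfolding X_def by (intro ge_one_powr_ge_zero) auto
    ultimately show ?thesis by (simp add: powr_add)
  qed
  have N: "real n + 11 \<le> 2 powr (L + 4)"
  proof -
    have "real n \<ge> 3" using n by simp
    then have "real n + 11 \<le> 16 * real n" by simp
    also have "\<dots> = 2 powr (L + 4)" using nL by (simp add: powr_add)
    finally show ?thesis .
  qed
  have "real ((S + 1) * 5 * (n + 11)) = (real S + 1) * 5 * (real n + 11)" by simp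
  also have "\<dots> \<le> 2 powr (X + 1) * 2 powr 3 * 2 powr (L + 4)"
    by (intro mult_mono S2 N) auto
  also have "\<dots> = 2 powr ((X + 1) + 3 + (L + 4))" by (simp only: powr_add)
  also have "\<dots> = 2 powr (X + L + 8)" by (simp add: algebra_simps)
  also have "\<dots> \<le> 2 powr (L powr (C + 6))"
  proof (intro powr_mono)
    have L6: "L powr 6 \<ge> 11"
    proof -
      have "L powr 6 = L ^ 6" using L1 by (simp add: powr_realpow)
      moreover have "(3/2::real) ^ 6 \<le> L ^ 6" using L by (intro power_mono) auto
      moreover have "(11::real) \<le> (3/2)^6" by (simp add: power_divide)
      ultimately show ?thesis by linarith
    qed
    have "L powr (C + 6) = X * L powr 6" unfolding X_def using L1 by (simp add: powr_add)
    moreover have "X * L powr 6 \<ge> X * 11" using L6 XL L1 unfolding X_def by (intro mult_left_mono) auto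
    ultimately show "X + L + 8 \<le> L powr (C + 6)" using XL L1 unfolding X_def by linarith
  qed simp
  finally show ?thesis unfolding L_def C_def .
qed



lemma PP_sink: "bp_nodes B ! PP B x s = Sink bb \<Longrightarrow> PP B x (s + k) = PP B x s"
proof (induction k)
  case 0 then show ?case by simp
next
  case (Suc k)
  then have "PP B x (Suc (s + k)) = bp_step B x (PP B x (s + k))" by (simp add: PP_def)
  then show ?case using Suc by (simp add: bp_step_def)
qed

lemma halt_final: "bnd s \<Longrightarrow> (s = ACC \<or> s = REJ) \<Longrightarrow> tm_step Mach x y (cf s i h) = None"
  by (rule halt_cf) auto

lemma enc_ACC_REJ: "enc REJ \<noteq> enc ACC"
  using dec_enc[of REJ] dec_enc[of ACC] by force

lemma accept_final:
  assumes "rch x y (cf S0 0 0) (cf s i h)" "s = ACC \<or> s = REJ"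
  shows "tm_accepts Mach x y \<longleftrightarrow> s = ACC"
proof -
  have "tm_accepts Mach x y \<longleftrightarrow> c_state (cf s i h) \<in> tm_accept Mach"
    by (rule accepts_iff) (use assms halt_final in \<open>auto simp: init_cf\<close>)
  then show ?thesis using assms(2) enc_ACC_REJ by (auto simp: cf_def Mach_def)
qed

lemma big_correct:
  assumes w: "width5_bp (length x) B" and n: "length x \<ge> 3"
  shows "tm_accepts Mach x (adv B) \<longleftrightarrow> bp_eval B x"
proof -
  have invall: "t \<le> Suc (bp_size B) \<Longrightarrow> (\<forall>s<t. inner (bp_nodes B ! PP B x s)) \<Longrightarrow> Inv B x t" for t
  proof (induction t)
    case 0 then show ?case using Inv0[OF n] by simp
  next
    case (Suc t)
    then have "Inv B x t" by simp
    then show ?case by (rule Inv_step[OF w]) (use Suc.prems in \<open>auto simp: less_Suc_eq_le\<close>)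
  qed
  show ?thesis
  proof (cases "\<exists>s\<le>bp_size B. \<not> inner (bp_nodes B ! PP B x s)")
    case True
    define s0 where "s0 = (LEAST s. s \<le> bp_size B \<and> \<not> inner (bp_nodes B ! PP B x s))"
    have s0: "s0 \<le> bp_size B \<and> \<not> inner (bp_nodes B ! PP B x s0)"
      using True unfolding s0_def by (metis (mono_tags, lifting) LeastI)
    have before: "\<forall>s<s0. inner (bp_nodes B ! PP B x s)"
    proof (intro allI impI)
      fix s assume "s < s0"
      then show "inner (bp_nodes B ! PP B x s)"
        using not_less_Least[of s "\<lambda>s. s \<le> bp_size B \<and> \<not> inner (bp_nodes B ! PP B x s)"] s0
        unfolding s0_def by auto
    qed
    obtain bb where bb: "bp_nodes B ! PP B x s0 = Sink bb"
      using s0 unfolding inner_def by (cases "bp_nodes B ! PP B x s0") auto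
    have inv: "Inv B x s0" using invall s0 before by simp
    obtain ih h where r: "rch x (adv B) (cf S0 0 0) (cf (if bb then ACC else REJ) ih h)"
      using Inv_sink[OF w inv _ bb] s0 by blast
    have acc: "tm_accepts Mach x (adv B) \<longleftrightarrow> bb"
      using accept_final[OF r] by auto
    have "PP B x (bp_size B) = PP B x s0"
      using PP_sink[OF bb, of "bp_size B - s0"] s0 by simp
    then have "bp_eval B x = bb" using bb by (simp add: bp_eval_def PP_def)
    then show ?thesis using acc by simp
  next
    case False
    then have all: "\<forall>s<Suc (bp_size B). inner (bp_nodes B ! PP B x s)" by (auto simp: less_Suc_eq_le)
    have inv: "Inv B x (Suc (bp_size B))" using invall all by simp
    obtain ih h where r: "rch x (adv B) (cf S0 0 0) (cf REJ ih h)"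
      using Inv_end[OF w inv] by blast
    have acc: "\<not> tm_accepts Mach x (adv B)"
      using accept_final[OF r] by auto
    have "inner (bp_nodes B ! PP B x (bp_size B))" using all by simp
    then have "\<not> bp_eval B x" by (auto simp: bp_eval_def PP_def inner_def)
    then show ?thesis using acc by simp
  qed
qed



lemma sink_fix: "bp_nodes B ! v = Sink b \<Longrightarrow> (bp_step B x ^^ k) v = v"
  by (induction k) (auto simp: bp_step_def)

lemma small_const:
  assumes w: "width5_bp n B" and sz: "bp_size B \<le> 2"
  shows "bp_eval B x = bp_eval B x'"
proof -
  obtain lev where lev: "\<forall>v < bp_size B. \<forall>i a b. bp_nodes B ! v = Inner i a b \<longrightarrow>
            lev a = Suc (lev v) \<and> lev b = Suc (lev v)"
    using w unfolding width5_bp_def by blast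
  have wf: "bp_wf n B" using w unfolding width5_bp_def by blast
  let ?s = "bp_start B"
  have s: "?s < bp_size B" using wf unfolding bp_wf_def by blast
  have "\<exists>c. \<forall>z. bp_eval B z = c"
  proof (cases "bp_nodes B ! ?s")
    case (Sink b)
    then show ?thesis by (intro exI[of _ b]) (simp add: bp_eval_def sink_fix)
  next
    case (Inner i a b)
    have ab: "a < bp_size B" "b < bp_size B" using wf s Inner unfolding bp_wf_def by blast+
    have la: "lev a = Suc (lev ?s)" "lev b = Suc (lev ?s)" using lev s Inner by blast+
    have neq: "a \<noteq> ?s" "b \<noteq> ?s" using la by auto
    have aeqb: "a = b" using ab neq s sz by linarith
    have sz2: "bp_size B = 2" using ab neq s sz by linarith
    obtain c where ca: "bp_nodes B ! a = Sink c"
    proof (cases "bp_nodes B ! a")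
      case (Sink c) then show ?thesis using that by blast
    next
      case (Inner i2 a2 b2)
      have "a2 < bp_size B" using wf ab Inner unfolding bp_wf_def by blast
      moreover have "lev a2 = Suc (lev a)" using lev ab Inner by blast
      moreover have "lev a2 = Suc (lev a)" using lev ab Inner by blast
      ultimately have "a2 \<noteq> a" "a2 \<noteq> ?s" using la by auto
      then have False using \<open>a2 < bp_size B\<close> ab neq s sz by linarith
      then show ?thesis ..
    qed
    have "\<forall>z. bp_eval B z = c"
    proof
      fix z
      have st: "bp_step B z ?s = a" using Inner aeqb by (simp add: bp_step_def)
      have "(bp_step B z ^^ 2) ?s = a" using st ca by (simp add: numeral_2_eq_2 bp_step_def)
      then show "bp_eval B z = c" using sz2 ca by (simp add: bp_eval_def)
    qed
    then show ?thesis by blast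
  qed
  then show ?thesis by auto
qed

lemma small_correct:
  assumes n: "length x \<ge> 1" "length x \<le> 2"
  shows "tm_accepts Mach x [b] \<longleftrightarrow> b"
proof -
  let ?y = "[b]"
  have a1: "rch x ?y (cf S0 0 0) (cf S1 1 0)"
    by (rule rch_step'[where da=MoveR and db=MoveS]) (use n in auto)
  have a2: "rch x ?y (cf S1 1 0) (cf S2 2 0)"
    by (rule rch_step'[where da=MoveR and db=MoveS]) (use n in auto)
  have toSM: "\<exists>i. i \<le> Suc (length x) \<and> rch x ?y (cf S0 0 0) (cf SM i 0)"
  proof (cases "length x = 1")
    case True
    have "tape_read x 2 = REnd" using True by (simp add: tape_read_def)
    then have "rch x ?y (cf S2 2 0) (cf SM 2 0)"
      by (intro rch_step'[where da=MoveS and db=MoveS]) (use n in auto)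
    then show ?thesis using rch_trans[OF a1 rch_trans[OF a2]] True by (intro exI[of _ "2::nat"]) auto
  next
    case False
    then have l2: "length x = 2" using n by simp
    have "tape_read x 2 \<noteq> REnd" "tape_read x 3 = REnd" using l2 by (auto simp: tape_read_def)
    then have "rch x ?y (cf S2 2 0) (cf S3 3 0)"
      by (intro rch_step'[where da=MoveR and db=MoveS]) (auto simp: l2)
    moreover have "rch x ?y (cf S3 3 0) (cf SM 3 0)"
      by (intro rch_step'[where da=MoveS and db=MoveS]) (use \<open>tape_read x 3 = REnd\<close> in \<open>auto simp: l2\<close>)
    ultimately have "rch x ?y (cf S2 2 0) (cf SM 3 0)" by (rule rch_trans)
    then show ?thesis using rch_trans[OF a1 rch_trans[OF a2]] l2 by (intro exI[of _ "3::nat"]) auto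
  qed
  then obtain i where il: "i \<le> Suc (length x)" and r: "rch x ?y (cf S0 0 0) (cf SM i 0)" by blast
  have b1: "rch x ?y (cf SM i 0) (cf SM2 i 1)"
    by (rule rch_step'[where da=MoveS and db=MoveR]) (use il in auto)
  have rd: "tape_read ?y 1 = Sym b" by (simp add: tape_read_def)
  have b2: "rch x ?y (cf SM2 i 1) (cf (if b then ACC else REJ) i 1)"
    by (rule rch_step'[where da=MoveS and db=MoveS]) (use rd il in auto)
  have "tm_accepts Mach x ?y \<longleftrightarrow> (if b then ACC else REJ) = ACC"
    by (rule accept_final[OF rch_trans[OF r rch_trans[OF b1 b2]]]) simp
  then show ?thesis by simp
qed



lemma len_concat_bound: "(\<forall>u\<in>set us. length u \<le> K) \<Longrightarrow> length (concat us) \<le> length us * K"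
  by (induction us) auto

lemma succ_in:
  assumes w: "width5_bp n B" and v: "v \<in> set (SL B t)" and nd: "bp_nodes B ! v = Inner i a b"
  shows "a \<in> set (SL B (Suc t)) \<and> b \<in> set (SL B (Suc t))"
proof -
  have vs: "v < bp_size B" using SL_sub[OF w v] .
  have lv: "LV B v = LV B (bp_start B) + t"
  proof (cases "t = 0")
    case True then show ?thesis using v by (simp add: SL_def)
  next
    case False then show ?thesis using v SL_set[of t B] by simp
  qed
  have "a < bp_size B \<and> b < bp_size B" using w vs nd unfolding width5_bp_def bp_wf_def by blast
  moreover have "LV B a = Suc (LV B v) \<and> LV B b = Suc (LV B v)"
    using LV_levp[OF w] vs nd unfolding levp_def by blast
  ultimately show ?thesis using lv SL_set[of "Suc t" B] by simp
qed

lemma ent_len: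
  assumes w: "width5_bp n B"
  shows "length (ent B t k) \<le> n + 11"
proof (cases "k < length (SL B t)")
  case True
  let ?v = "SL B t ! k"
  have v: "?v \<in> set (SL B t)" using True by simp
  have vs: "?v < bp_size B" using SL_sub[OF w v] .
  show ?thesis
  proof (cases "bp_nodes B ! ?v")
    case (Inner i a b)
    have i: "i < n" using w vs Inner unfolding width5_bp_def bp_wf_def by blast
    have ab: "a \<in> set (SL B (Suc t))" "b \<in> set (SL B (Suc t))" using succ_in[OF w v Inner] by auto
    have "idx (SL B (Suc t)) a < 5" "idx (SL B (Suc t)) b < 5"
      using idx[OF ab(1)] idx[OF ab(2)] SL_len[OF w, of "Suc t"] by auto
    then show ?thesis using True Inner i by (simp add: ent_def code_def entry_def)
  next
    case (Sink bb)
    then show ?thesis using True by (simp add: ent_def code_def entry_def)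
  qed
next
  case False
  then show ?thesis by (simp add: ent_def entry_def)
qed

lemma adv_len:
  assumes w: "width5_bp n B"
  shows "length (adv B) \<le> (bp_size B + 1) * 5 * (n + 11)"
proof -
  have "length (blk B t) \<le> 5 * (n + 11)" for t
    unfolding blk_def using len_concat_bound[of "map (ent B t) [0..<5]" "n + 11"] ent_len[OF w] by auto
  then have "length (adv B) \<le> Suc (bp_size B) * (5 * (n + 11))"
    unfolding adv_def using len_concat_bound[of "map (blk B) [0..<Suc (bp_size B)]" "5 * (n + 11)"] by auto
  then show ?thesis by (simp add: algebra_simps)
qed

theorem lemma4:
  fixes B :: "nat \<Rightarrow> bp" and c :: real
  assumes "\<And>n. n \<ge> 1 \<Longrightarrow> width5_bp n (B n)"
      and "\<And>n. n \<ge> 1 \<Longrightarrow> real (bp_size (B n)) \<le> 2 powr ((log 2 (real n)) powr c)"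
  shows "\<exists>(M :: tm) (k :: nat) (c' :: real) (a :: nat \<Rightarrow> bool list).
           wf_tm M \<and> tm_const_space M k \<and>
           (\<forall>n \<ge> 1. real (length (a n)) \<le> 2 powr ((log 2 (real n)) powr c')) \<and>
           (\<forall>x :: bool list. length x \<ge> 1 \<longrightarrow>
              (tm_accepts M x (a (length x)) \<longleftrightarrow> bp_eval (B (length x)) x))"
proof -
  define a where "a n = (if n \<le> 2 then [bp_eval (B n) (replicate n False)] else adv (B n))" for n
  have len: "real (length (a n)) \<le> 2 powr ((log 2 (real n)) powr (max c 1 + 6))" if n: "n \<ge> 1" for n
  proof (cases "n \<le> 2")
    case True
    have "0 \<le> (log 2 (real n)) powr (max c 1 + 6)" by simp
    then have "1 \<le> (2::real) powr ((log 2 (real n)) powr (max c 1 + 6))"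
      by (intro ge_one_powr_ge_zero) auto
    then show ?thesis using True by (simp add: a_def)
  next
    case False
    have "length (a n) \<le> (bp_size (B n) + 1) * 5 * (n + 11)"
      using False adv_len[OF assms(1)[OF n]] by (simp add: a_def)
    then have "real (length (a n)) \<le> real ((bp_size (B n) + 1) * 5 * (n + 11))" by linarith
    also have "\<dots> \<le> 2 powr ((log 2 (real n)) powr (max c 1 + 6))"
      by (rule bound_arith) (use False assms(2)[OF n] in auto)
    finally show ?thesis .
  qed
  have corr: "tm_accepts Mach x (a (length x)) \<longleftrightarrow> bp_eval (B (length x)) x" if x: "length x \<ge> 1" for x
  proof (cases "length x \<le> 2")
    case True
    let ?n = "length x"
    have sz: "bp_size (B ?n) \<le> 2"
    proof -
      have "real (bp_size (B ?n)) \<le> 2 powr ((log 2 (real ?n)) powr c)" using assms(2) x by blast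
      moreover have "?n = 1 \<or> ?n = 2" using x True by linarith
      ultimately have "real (bp_size (B ?n)) \<le> 2" by auto
      then show ?thesis by linarith
    qed
    have "bp_eval (B ?n) (replicate ?n False) = bp_eval (B ?n) x"
      by (rule small_const[OF assms(1)[OF x] sz])
    then show ?thesis using small_correct[OF x True] True by (simp add: a_def)
  next
    case False
    then show ?thesis using big_correct[OF assms(1)[OF x]] by (simp add: a_def)
  qed
  show ?thesis
    apply (rule exI[of _ Mach], rule exI[of _ "1::nat"], rule exI[of _ "max c 1 + 6"], rule exI[of _ a])
    using wf_Mach const_Mach len corr by blast
qed

end
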